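(* Let $q$ be a prime power, let $n=m$, let $d\le n$ be even, and let $\tau=d/2$. Then there exist a code $\mathcal C\subseteq\mathbb F_{q^m}^n$ with minimum rank distance exactly $d$ and a word $\mathbf r\in\mathbb F_{q^m}^n$ such that $|\mathcal C\cap\mathcal B_\tau(\mathbf r)|\ge q^{n-\tau}$.
   Context: Fixing a basis of $\mathbb F_{q^m}$ over $\mathbb F_q$, each vector in $\mathbb F_{q^m}^n$ is identified with an $m\times n$ matrix over $\mathbb F_q$; $\mathrm{rk}$ denotes its rank. The minimum rank distance of $\mathcal C$ is $\min\{\mathrm{rk}(\mathbf c_1-\mathbf c_2):\mathbf c_1\ne\mathbf c_2\in\mathcal C\}$, and $\mathcal B_\tau(\mathbf r)=\{\mathbf x:\mathrm{rk}(\mathbf x-\mathbf r)\le\tau\}$. Codes need not be linear. *)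

theory Defs
  imports "HOL-Analysis.Analysis"
begin

text \<open>Words of F_{q^m}^n are identified (via a fixed basis) with m x n matrices over F_q,
  here of type 'a^'n^'m with 'a a finite field of order q. The rank distance is the rank of
  the difference.\<close>

definition rank_dist :: "'a::field^'n^'m \<Rightarrow> 'a^'n^'m \<Rightarrow> nat" where
  "rank_dist x y = rank (x - y)"

definition min_rank_distance :: "('a::field^'n^'m) set \<Rightarrow> nat" where
  "min_rank_distance C = Min {rank_dist c1 c2 | c1 c2. c1 \<in> C \<and> c2 \<in> C \<and> c1 \<noteq> c2}"

definition rank_ball :: "nat \<Rightarrow> 'a::field^'n^'m \<Rightarrow> ('a^'n^'m) set" where
  "rank_ball \<tau> r = {x. rank (x - r) \<le> \<tau>}"

end

theory Submission imports Defs "HOL-Algebra.Algebraic_Closure_Type" "HOL-Number_Theory.Residues"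
begin


lemma pow_card_same:
  fixes x :: "'a :: {finite,field}"
  shows   "x ^ CARD('a) = x"
proof (cases "x = 0")
  case False
  have "x * (\<Prod>y\<in>UNIV-{0}. x * y) = x * x ^ (card (UNIV :: 'a set) - 1) * \<Prod>(UNIV-{0})"
    by (simp add: prod.distrib mult_ac)
  also have "x * x ^ (card (UNIV :: 'a set) - 1) = x ^ Suc (card (UNIV :: 'a set) - 1)"
    by (subst power_Suc) auto
  also have "Suc (card (UNIV :: 'a set) - 1) = card (UNIV :: 'a set)"
    using finite_UNIV_card_ge_0[where ?'a = 'a] by simp
  also have "(\<Prod>y\<in>UNIV-{0}. x * y) = (\<Prod>y\<in>UNIV-{0}. y)"
    by (rule prod.reindex_bij_witness[of _ "\<lambda>y. y / x" "\<lambda>y. x * y"]) (use False in auto)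
  finally show ?thesis
    by simp
qed (use finite_UNIV_card_ge_0[where ?'a = 'a] in auto)

lemma binom_mid:
  fixes a b :: "'b::comm_ring_1"
  assumes "q \<ge> 1"
  shows "(a+b)^q - a^q - b^q = (\<Sum>i\<in>{1..<q}. of_nat (q choose i) * b^(q-i) * a^i)"
proof -
  have "(a+b)^q = (\<Sum>i\<le>q. of_nat (q choose i) * a^i * b^(q-i))"
    by (rule binomial_ring)
  also have "{..q} = insert 0 (insert q {1..<q})" using assms by auto
  also have "(\<Sum>i\<in>insert 0 (insert q {1..<q}). of_nat (q choose i) * a^i * b^(q-i))
      = b^q + (a^q + (\<Sum>i\<in>{1..<q}. of_nat (q choose i) * a^i * b^(q-i)))"
    using assms by (subst sum.insert; simp)+
  finally show ?thesis by (simp add: mult_ac)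
qed

lemma poly_vanish:
  fixes c :: "nat \<Rightarrow> 'b::idom"
  assumes "finite A" "card A \<ge> m" "\<forall>y\<in>A. (\<Sum>i\<in>{1..<m}. c i * y^i) = 0"
  shows "(\<Sum>i\<in>{1..<m}. c i * y^i) = 0"
proof -
  define P where "P = (\<Sum>i\<in>{1..<m}. Polynomial.monom (c i) i)"
  have ev: "poly P x = (\<Sum>i\<in>{1..<m}. c i * x^i)" for x
    by (simp add: P_def poly_sum poly_monom)
  have "P = 0"
  proof (rule ccontr)
    assume nz: "P \<noteq> 0"
    have dg: "Polynomial.degree P < m" if "m > 0"
    proof -
      have "Polynomial.degree P \<le> m - 1" unfolding P_def
        by (rule Polynomial.degree_sum_le) (auto intro: order.trans[OF degree_monom_le])
      thus ?thesis using that by simp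
    qed
    have "A \<subseteq> {x. poly P x = 0}" using assms(3) ev by auto
    hence "card A \<le> card {x. poly P x = 0}"
      using poly_roots_finite[OF nz] by (intro card_mono) auto
    also have "\<dots> \<le> Polynomial.degree P" by (rule card_poly_roots_bound[OF nz])
    finally have "card A \<le> Polynomial.degree P" .
    moreover have "m > 0" using nz P_def by (cases m) auto
    ultimately show False using dg assms(2) by linarith
  qed
  thus ?thesis using ev[of y] by simp
qed

lemma frob_q:
  fixes y z :: "'a::{finite,field} alg_closure"
  shows "(y+z)^CARD('a) = y^CARD('a) + z^CARD('a)"
proof -
  let ?q = "CARD('a)"
  have q1: "?q \<ge> 1" by (simp add: Suc_leI)
  have fin: "finite (range (to_ac :: 'a \<Rightarrow> _))" by simp
  have cr: "card (range (to_ac :: 'a \<Rightarrow> _)) = ?q"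
    by (simp add: card_image inj_to_ac)
  have E: "(a+b)^?q - a^?q - b^?q = (\<Sum>i\<in>{1..<?q}. of_nat (?q choose i) * b^(?q-i) * a^i)"
    for a b :: "'a alg_closure" using binom_mid[OF q1] .
  have r1: "(a + to_ac c)^?q - a^?q - (to_ac c)^?q = 0" for a :: "'a alg_closure" and c :: 'a
  proof -
    have "(\<Sum>i\<in>{1..<?q}. (of_nat (?q choose i) * (to_ac c)^(?q-i)) * a^i) = 0"
    proof (rule poly_vanish[OF fin, where c="\<lambda>i. of_nat (?q choose i) * (to_ac c)^(?q-i)"])
      show "?q \<le> card (range (to_ac :: 'a \<Rightarrow> _))" using cr by simp
      show "\<forall>y\<in>range to_ac. (\<Sum>i\<in>{1..<?q}. of_nat (?q choose i) * to_ac c ^ (?q - i) * y ^ i) = 0"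
      proof
        fix y assume "y \<in> range (to_ac :: 'a \<Rightarrow> _)"
        then obtain b where yb: "y = to_ac b" by auto
        have "(y + to_ac c)^?q - y^?q - (to_ac c)^?q = 0"
          unfolding yb by (simp flip: to_ac_add to_ac_power add: pow_card_same) (simp add: to_ac_add)
        thus "(\<Sum>i\<in>{1..<?q}. of_nat (?q choose i) * to_ac c ^ (?q - i) * y ^ i) = 0"
          using E[of y "to_ac c"] by simp
      qed
    qed
    thus ?thesis using E[of a "to_ac c"] by (simp add: mult_ac)
  qed
  have "(\<Sum>i\<in>{1..<?q}. (of_nat (?q choose i) * y^(?q-i)) * z^i) = 0"
  proof (rule poly_vanish[OF fin, where c="\<lambda>i. of_nat (?q choose i) * y^(?q-i)"])
    show "?q \<le> card (range (to_ac :: 'a \<Rightarrow> _))" using cr by simp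
    show "\<forall>x\<in>range to_ac. (\<Sum>i\<in>{1..<?q}. of_nat (?q choose i) * y ^ (?q - i) * x ^ i) = 0"
    proof
      fix x assume "x \<in> range (to_ac :: 'a \<Rightarrow> _)"
      then obtain c where xc: "x = to_ac c" by auto
      have "(x+y)^?q - x^?q - y^?q = 0" using r1[of y c] unfolding xc by (simp add: add.commute algebra_simps)
      thus "(\<Sum>i\<in>{1..<?q}. of_nat (?q choose i) * y ^ (?q - i) * x ^ i) = 0"
        using E[of x y] by simp
    qed
  qed
  hence "(z+y)^?q - z^?q - y^?q = 0" using E[of z y] by (simp add: mult_ac)
  thus ?thesis by (simp add: add.commute algebra_simps)
qed

lemma frob_Q:
  fixes y z :: "'a::{finite,field} alg_closure"
  shows "(y+z)^(CARD('a)^j) = y^(CARD('a)^j) + z^(CARD('a)^j)"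
proof (induction j)
  case (Suc j)
  have "(y+z)^(CARD('a)^Suc j) = ((y+z)^(CARD('a)^j))^CARD('a)"
    by (simp only: power_Suc2 power_mult)
  also have "\<dots> = (y^(CARD('a)^j))^CARD('a) + (z^(CARD('a)^j))^CARD('a)"
    by (simp add: Suc frob_q)
  finally show ?case by (simp only: power_Suc2 power_mult)
qed simp

lemma card_ge2: "CARD('a::{finite,field}) \<ge> 2"
proof -
  have "card {0::'a, 1} \<le> CARD('a)" by (rule card_mono) auto
  thus ?thesis by simp
qed

lemma of_nat_card_K: "(of_nat CARD('a::{finite,field}) :: 'a alg_closure) = 0"
proof -
  have "(of_nat CARD('a) :: 'a) = 0"
    using CHAR_dvd_CARD[where 'a='a] of_nat_eq_0_iff_char_dvd by blast
  hence "to_ac (of_nat CARD('a) :: 'a) = 0" by simp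
  thus ?thesis by simp
qed

lemma card_set_mset_distinct:
  assumes "\<forall>x. count A x \<le> 1"
  shows "card (set_mset A) = size A"
  using assms
proof (induction A)
  case (add x A)
  have "x \<notin># A" using add.prems[rule_format, of x] by (auto simp: count_eq_zero_iff[symmetric])
  moreover have "\<forall>y. count A y \<le> 1"
  proof
    fix y show "count A y \<le> 1" using add.prems[rule_format, of y] by (auto split: if_splits)
  qed
  ultimately show ?case using add.IH by simp
qed simp

lemma card_S:
  assumes "k \<ge> 1"
  shows "card {z::'a::{finite,field} alg_closure. z^(CARD('a)^k) = z} = CARD('a)^k"
proof -
  let ?Q = "CARD('a)^k"
  have Q2: "?Q \<ge> 2"
  proof -
    have "CARD('a)^1 \<le> CARD('a)^k" using assms card_ge2[where 'a='a]
      by (intro power_increasing) auto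
    hence "CARD('a) \<le> CARD('a)^k" by simp
    thus ?thesis using card_ge2[where 'a='a] by linarith
  qed
  have ofQ: "(of_nat ?Q :: 'a alg_closure) = 0"
    using assms by (simp add: of_nat_card_K)
  define p :: "'a alg_closure poly" where "p = Polynomial.monom 1 ?Q - [:0,1:]"
  have evp: "poly p z = z^?Q - z" for z by (simp add: p_def poly_monom)
  have c01: "Polynomial.coeff [:0::'a alg_closure, 1:] ?Q = 0"
  proof -
    obtain m where "?Q = Suc (Suc m)" using Q2 by (metis add_2_eq_Suc le_Suc_ex)
    thus ?thesis by (simp add: coeff_pCons)
  qed
  have cQ: "Polynomial.coeff p ?Q = 1" using c01 by (simp add: p_def coeff_monom)
  have p0: "p \<noteq> 0" using cQ by auto
  have dle: "Polynomial.degree p \<le> ?Q" unfolding p_def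
    using Q2 by (intro Polynomial.degree_diff_le) (auto simp: Polynomial.degree_monom_eq)
  have dge: "Polynomial.degree p \<ge> ?Q" using cQ by (intro Polynomial.le_degree) simp
  have dp: "Polynomial.degree p = ?Q" using dle dge by simp
  have lc: "Polynomial.lead_coeff p = 1" using dp cQ by simp
  obtain A where A: "size A = Polynomial.degree p" "p = Polynomial.smult (Polynomial.lead_coeff p) (\<Prod>x\<in>#A. [:-x, 1:])"
    using alg_closed_imp_factorization[OF p0] by blast
  have pA: "p = (\<Prod>x\<in>#A. [:-x, 1:])" using A(2) lc by simp
  have roots: "poly p z = 0 \<longleftrightarrow> z \<in># A" for z
  proof -
    have "poly p z = (\<Prod>x\<in>#A. z - x)" by (subst pA) (simp add: poly_prod_mset)
    thus ?thesis by (auto simp: prod_mset_zero_iff)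
  qed
  have dpd: "poly (pderiv p) a = -1" for a
    using ofQ by (simp add: p_def pderiv_diff pderiv_monom pderiv_pCons power_0_left poly_monom)
  have cnt: "\<forall>x. count A x \<le> 1"
  proof (rule ccontr)
    assume "\<not> (\<forall>x. count A x \<le> 1)"
    then obtain a where "\<not> count A a \<le> 1" by blast
    hence c2: "count A a \<ge> 2" by linarith
    have "0 < count A a" using c2 by linarith
    hence aA: "a \<in># A" by simp
    define A1 where "A1 = A - {#a#}"
    have AA1: "A = add_mset a A1" unfolding A1_def using aA by (simp add: insert_DiffM)
    have "count A1 a \<ge> 1" using c2 unfolding A1_def by simp
    hence "0 < count A1 a" by linarith
    hence aA1: "a \<in># A1" by simp
    define A' where "A' = A1 - {#a#}"
    have A': "A = add_mset a (add_mset a A')" unfolding A'_def using AA1 aA1 by (simp add: insert_DiffM)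
    have "p = [:-a,1:] * ([:-a,1:] * (\<Prod>x\<in>#A'. [:-x, 1:]))" by (simp add: pA A')
    moreover have "poly (pderiv ([:-a,1:] * ([:-a,1:] * h))) a = 0" for h :: "'a alg_closure poly"
    proof -
      have pf: "poly [:-a,1:] a = 0" by simp
      show ?thesis by (simp only: pderiv_mult poly_add poly_mult pf) simp
    qed
    ultimately have "poly (pderiv p) a = 0" by metis
    thus False using dpd[of a] by simp
  qed
  have "{z::'a alg_closure. z^?Q = z} = set_mset A" using roots evp by auto
  hence "card {z::'a alg_closure. z^?Q = z} = size A" using card_set_mset_distinct[OF cnt] by simp
  thus ?thesis using A(1) dp by simp
qed




lemma vs_card_span:
  fixes scale :: "'a::{finite,field} \<Rightarrow> 'b::ab_group_add \<Rightarrow> 'b"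
  assumes vs: "vector_space scale" and fin: "finite B" and ind: "\<not> module.dependent scale B"
  shows "card (module.span scale B) = CARD('a) ^ card B"
proof -
  interpret vector_space scale by (rule vs)
  show ?thesis using fin ind
  proof (induction B rule: finite_induct)
    case empty
    then show ?case by simp
  next
    case (insert b B)
    have indB: "independent B" and nb: "b \<notin> span B"
      using insert.prems insert.hyps(2) by (auto simp: independent_insert)
    have eq: "span (insert b B) = (\<lambda>(c,w). scale c b + w) ` (UNIV \<times> span B)"
    proof
      show "span (insert b B) \<subseteq> (\<lambda>(c,w). scale c b + w) ` (UNIV \<times> span B)"
      proof
        fix x assume "x \<in> span (insert b B)"
        then obtain c where "x - scale c b \<in> span B" by (auto simp: span_insert)
        thus "x \<in> (\<lambda>(c,w). scale c b + w) ` (UNIV \<times> span B)"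
          by (intro image_eqI[of _ _ "(c, x - scale c b)"]) auto
      qed
      show "(\<lambda>(c,w). scale c b + w) ` (UNIV \<times> span B) \<subseteq> span (insert b B)"
      proof clarify
        fix c w assume "w \<in> span B"
        hence "w \<in> span (insert b B)" using span_mono[of B "insert b B"] by blast
        moreover have "scale c b \<in> span (insert b B)" by (intro span_scale span_base) simp
        ultimately show "scale c b + w \<in> span (insert b B)" by (rule span_add[rotated])
      qed
    qed
    have inj: "inj_on (\<lambda>(c,w). scale c b + w) (UNIV \<times> span B)"
    proof (rule inj_onI, clarify)
      fix c w c' w' assume w: "w \<in> span B" "w' \<in> span B" and e: "scale c b + w = scale c' b + w'"
      have "scale (c - c') b = w' - w" using e by (simp add: scale_left_diff_distrib algebra_simps)
      hence "scale (c - c') b \<in> span B" using w by (simp add: span_diff)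
      hence "c = c'" using nb span_scale[of "scale (c - c') b" B "inverse (c - c')"]
        by (cases "c = c'") (auto simp: scale_scale)
      thus "c = c' \<and> w = w'" using e by simp
    qed
    have "card (span (insert b B)) = card (UNIV::'a set) * card (span B)"
      unfolding eq by (subst card_image[OF inj]) (simp add: card_cartesian_product)
    thus ?case using insert.IH[OF indB] insert.hyps by simp
  qed
qed

lemma vs_card_subspace:
  fixes scale :: "'a::{finite,field} \<Rightarrow> 'b::ab_group_add \<Rightarrow> 'b"
  assumes vs: "vector_space scale" and fin: "finite W" and sub: "module.subspace scale W"
  shows "card W = CARD('a) ^ vector_space.dim scale W"
proof -
  interpret vector_space scale by (rule vs)
  obtain B where B: "B \<subseteq> W" "independent B" "W \<subseteq> span B" "card B = dim W"
    using basis_exists by blast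
  have "span B = W" using span_subspace[OF B(1) B(3) sub] .
  moreover have "finite B" using B(1) fin finite_subset by blast
  ultimately show ?thesis using vs_card_span[OF vs _ B(2)] B(4) by simp
qed




definition scK :: "'a::field \<Rightarrow> 'a alg_closure \<Rightarrow> 'a alg_closure" where
  "scK a z = to_ac a * z"

definition scP :: "'a::field \<Rightarrow> 'a alg_closure \<times> 'a alg_closure \<Rightarrow> 'a alg_closure \<times> 'a alg_closure" where
  "scP a p = (to_ac a * fst p, to_ac a * snd p)"

lemma vsK: "vector_space (scK :: 'a::field \<Rightarrow> _)"
  by unfold_locales (simp_all add: scK_def algebra_simps)

lemma vsP: "vector_space (scP :: 'a::field \<Rightarrow> _)"
  by unfold_locales (simp_all add: scP_def algebra_simps)

lemma pow_cardk: "(x::'a::{finite,field}) ^ (CARD('a)^k) = x"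
proof (induction k)
  case (Suc k)
  have "x ^ (CARD('a)^Suc k) = (x ^ (CARD('a)^k))^CARD('a)" by (simp only: power_Suc2 power_mult)
  thus ?case using Suc pow_card_same by simp
qed simp

lemma neg_Q:
  fixes x :: "'a::{finite,field} alg_closure"
  assumes "k \<ge> 1"
  shows "(-x)^(CARD('a)^k) = - (x^(CARD('a)^k))"
proof -
  have "(x + -x)^(CARD('a)^k) = x^(CARD('a)^k) + (-x)^(CARD('a)^k)" by (rule frob_Q)
  moreover have "(0::'a alg_closure)^(CARD('a)^k) = 0" by simp
  ultimately have "0 = x^(CARD('a)^k) + (-x)^(CARD('a)^k)" by simp
  thus ?thesis by (simp add: eq_neg_iff_add_eq_0 add.commute)
qed

lemma core:
  fixes t k :: nat
  assumes t1: "1 \<le> t" and tk: "t \<le> k"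
  shows "\<exists>(V :: ('a::{finite,field} alg_closure \<times> 'a alg_closure) set) F (S :: 'a alg_closure set).
      module.subspace scP V \<and> finite V \<and> card V = CARD('a)^(t+k) \<and> card S = CARD('a)^k \<and>
      (\<forall>s\<in>S. Vector_Spaces.linear scP scP (F s) \<and> F s ` V \<subseteq> V \<and> card (F s ` V) \<le> CARD('a)^t) \<and>
      (\<forall>s\<in>S. \<forall>u\<in>S. s \<noteq> u \<longrightarrow> card ((\<lambda>v. F s v - F u v) ` V) = CARD('a)^(2*t))"
proof -
  let ?q = "CARD('a)"
  let ?Q = "CARD('a)^k"
  have k1: "k \<ge> 1" using t1 tk by simp
  have q1: "?q > 1" using card_ge2[where 'a='a] by simp
  define S :: "'a alg_closure set" where "S = {z. z^?Q = z}"
  have cS: "card S = ?Q" unfolding S_def by (rule card_S[OF k1])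
  have finS: "finite S" using cS by (intro card_ge_0_finite) simp
  have S_add: "x + y \<in> S" if "x \<in> S" "y \<in> S" for x y
    using that by (simp add: S_def frob_Q)
  have S_neg: "-x \<in> S" if "x \<in> S" for x
    using that by (simp add: S_def neg_Q[OF k1])
  have S_diff: "x - y \<in> S" if "x \<in> S" "y \<in> S" for x y
    using S_add[OF that(1) S_neg[OF that(2)]] by simp
  have S_mult: "x * y \<in> S" if "x \<in> S" "y \<in> S" for x y
    using that by (simp add: S_def power_mult_distrib)
  have S_inv: "inverse x \<in> S" if "x \<in> S" for x
    using that by (simp add: S_def power_inverse)
  have S_0: "0 \<in> S" by (simp add: S_def)
  have S_ac: "to_ac a \<in> S" for a :: 'a
    by (simp add: S_def pow_cardk flip: to_ac_power)
  interpret K: vector_space "scK :: 'a \<Rightarrow> _" by (rule vsK)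
  interpret KK: vector_space_pair "scK :: 'a \<Rightarrow> _" "scK :: 'a \<Rightarrow> _" by unfold_locales
  interpret P: vector_space "scP :: 'a \<Rightarrow> _" by (rule vsP)
  have subS: "K.subspace S"
    unfolding K.subspace_def using S_add S_mult S_ac S_0
    by (auto simp: scK_def intro: S_mult)
  have dimS: "K.dim S = k"
  proof -
    have "?q ^ K.dim S = ?q ^ k" using vs_card_subspace[OF vsK finS subS] cS by simp
    thus ?thesis using q1 by (simp add: power_inject_exp)
  qed
  obtain BS where BS: "BS \<subseteq> S" "K.independent BS" "S \<subseteq> K.span BS" "card BS = K.dim S"
    using K.basis_exists by blast
  have finBS: "finite BS" using BS(1) finS finite_subset by blast
  have spBS: "K.span BS = S" using K.span_subspace[OF BS(1) BS(3) subS] .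
  obtain BU where BU: "BU \<subseteq> BS" "card BU = t" "finite BU"
    using obtain_subset_with_card_n[of t BS] BS(4) dimS tk by auto
  have indBU: "K.independent BU" using K.independent_mono[OF BS(2) BU(1)] .
  define U where "U = K.span BU"
  have cU: "card U = ?q ^ t" unfolding U_def using vs_card_span[OF vsK BU(3) indBU] BU(2) by simp
  have US: "U \<subseteq> S" unfolding U_def using K.span_mono[OF BU(1)] spBS by simp
  have subU: "K.subspace U" unfolding U_def by simp
  have U_add: "x + y \<in> U" if "x \<in> U" "y \<in> U" for x y using that unfolding U_def by (rule K.span_add)
  have U_diff: "x - y \<in> U" if "x \<in> U" "y \<in> U" for x y using that unfolding U_def by (rule K.span_diff)
  have U0: "0 \<in> U" unfolding U_def by (rule K.span_zero)
  define \<pi> where "\<pi> = KK.construct BS (\<lambda>b. if b \<in> BU then b else 0)"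
  have lin\<pi>: "Vector_Spaces.linear scK scK \<pi>" unfolding \<pi>_def by (rule KK.linear_construct[OF BS(2)])
  have \<pi>_add: "\<pi> (x + y) = \<pi> x + \<pi> y" for x y by (rule KK.linear_add[OF lin\<pi>])
  have \<pi>_sc: "\<pi> (scK c x) = scK c (\<pi> x)" for c x by (rule KK.linear_scale[OF lin\<pi>])
  have \<pi>_diff: "\<pi> (x - y) = \<pi> x - \<pi> y" for x y
    by (rule KK.linear_diff[OF lin\<pi>])
  have \<pi>_U: "\<pi> u = u" if "u \<in> U" for u
  proof -
    have "Vector_Spaces.linear scK scK (\<lambda>x::'a alg_closure. x)"
      by (simp add: Vector_Spaces.linear_iff vsK)
    moreover have "\<pi> b = b" if "b \<in> BU" for b
      unfolding \<pi>_def using KK.construct_basis[OF BS(2)] that BU(1) by auto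
    ultimately show ?thesis using KK.linear_eq_on[OF lin\<pi>, of "\<lambda>x. x" u BU] that U_def by auto
  qed
  have \<pi>_S: "\<pi> z \<in> U" if "z \<in> S" for z
  proof -
    have "\<pi> ` BS \<subseteq> U" unfolding \<pi>_def U_def
      using KK.construct_basis[OF BS(2)] by (auto intro: K.span_base K.span_zero)
    hence "K.span (\<pi> ` BS) \<subseteq> U" using subU by (rule K.span_minimal)
    moreover have "\<pi> ` K.span BS = K.span (\<pi> ` BS)" by (rule KK.linear_span_image[OF lin\<pi>, symmetric])
    ultimately show ?thesis using that spBS by auto
  qed
  define V where "V = U \<times> S"
  have U_sc: "to_ac c * x \<in> U" if "x \<in> U" for c x
    using K.span_scale[of x BU c] that unfolding U_def scK_def by simp
  have subV: "P.subspace V"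
  proof (rule P.subspaceI)
    show "0 \<in> V" unfolding V_def using U0 S_0 by (simp add: zero_prod_def)
    show "x + y \<in> V" if "x \<in> V" "y \<in> V" for x y
      using that U_add S_add unfolding V_def by (auto simp: plus_prod_def)
    show "scP c x \<in> V" if "x \<in> V" for c x
      using that U_sc S_mult S_ac unfolding V_def by (auto simp: scP_def)
  qed
  have finV: "finite V" unfolding V_def using finS US finite_subset by blast
  have cV: "card V = ?q^(t+k)" unfolding V_def using cU cS by (simp add: card_cartesian_product power_add)
  define F where "F = (\<lambda>s (p :: 'a alg_closure \<times> 'a alg_closure).
     (fst p + \<pi> (s * snd p), s * (fst p + \<pi> (s * snd p))))"
  have linF: "Vector_Spaces.linear scP scP (F s)" for s
  proof -
    have "\<pi> (s * (y1 + y2)) = \<pi> (s * y1) + \<pi> (s * y2)" for y1 y2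
      by (simp add: distrib_left \<pi>_add)
    moreover have "\<pi> (s * (to_ac c * y)) = to_ac c * \<pi> (s * y)" for c y
      using \<pi>_sc[of c "s * y"] by (simp add: scK_def mult_ac)
    ultimately show ?thesis
      by (simp add: Vector_Spaces.linear_iff vsP F_def scP_def algebra_simps)
  qed
  have FV: "F s ` V \<subseteq> (\<lambda>w. (w, s * w)) ` U" if "s \<in> S" for s
  proof
    fix p assume "p \<in> F s ` V"
    then obtain x y where xy: "x \<in> U" "y \<in> S" "p = F s (x, y)" unfolding V_def by auto
    have "x + \<pi> (s * y) \<in> U" using U_add[OF xy(1) \<pi>_S[OF S_mult[OF that xy(2)]]] .
    thus "p \<in> (\<lambda>w. (w, s * w)) ` U" using xy(3) by (auto simp: F_def)
  qed
  have FVV: "F s ` V \<subseteq> V" if "s \<in> S" for s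
    using FV[OF that] US S_mult[OF that] unfolding V_def by auto
  have cF: "card (F s ` V) \<le> ?q^t" if "s \<in> S" for s
  proof -
    have "card (F s ` V) \<le> card ((\<lambda>w. (w, s * w)) ` U)"
      using FV[OF that] finV by (intro card_mono) (auto intro: finite_imageI finite_subset[OF US finS])
    also have "\<dots> \<le> card U" by (rule card_image_le) (rule finite_subset[OF US finS])
    finally show ?thesis using cU by simp
  qed
  have cD: "card ((\<lambda>v. F s v - F u v) ` V) = ?q^(2*t)" if su: "s \<in> S" "u \<in> S" "s \<noteq> u" for s u
  proof -
    let ?G = "\<lambda>(a, b). (a - b, s * a - u * b)"
    have eq: "(\<lambda>v. F s v - F u v) ` V = ?G ` (U \<times> U)"
    proof
      show "(\<lambda>v. F s v - F u v) ` V \<subseteq> ?G ` (U \<times> U)"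
      proof
        fix p assume "p \<in> (\<lambda>v. F s v - F u v) ` V"
        then obtain x y where xy: "x \<in> U" "y \<in> S" "p = F s (x, y) - F u (x, y)" unfolding V_def by auto
        have a: "x + \<pi> (s * y) \<in> U" using U_add[OF xy(1) \<pi>_S[OF S_mult[OF su(1) xy(2)]]] .
        have b: "x + \<pi> (u * y) \<in> U" using U_add[OF xy(1) \<pi>_S[OF S_mult[OF su(2) xy(2)]]] .
        show "p \<in> ?G ` (U \<times> U)" using xy(3) a b
          by (intro image_eqI[of _ _ "(x + \<pi> (s * y), x + \<pi> (u * y))"]) (auto simp: F_def)
      qed
      show "?G ` (U \<times> U) \<subseteq> (\<lambda>v. F s v - F u v) ` V"
      proof
        fix p assume "p \<in> ?G ` (U \<times> U)"
        then obtain a b where ab: "a \<in> U" "b \<in> U" and pab: "p = ?G (a, b)" by auto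
        define y where "y = inverse (s - u) * (a - b)"
        define x where "x = a - \<pi> (s * y)"
        have yS: "y \<in> S" unfolding y_def
          using S_mult[OF S_inv[OF S_diff[OF su(1) su(2)]] S_diff] ab US by auto
        have xU: "x \<in> U" unfolding x_def using U_diff[OF ab(1) \<pi>_S[OF S_mult[OF su(1) yS]]] .
        have "s * y - u * y = a - b" unfolding y_def using su(3)
          by (simp add: left_diff_distrib[symmetric] mult.assoc[symmetric])
        hence "\<pi> (s * y) - \<pi> (u * y) = a - b" using \<pi>_diff \<pi>_U[OF U_diff[OF ab]] by metis
        hence e1: "x + \<pi> (u * y) = b" unfolding x_def by (simp add: algebra_simps)
        have e2: "x + \<pi> (s * y) = a" unfolding x_def by simp
        show "p \<in> (\<lambda>v. F s v - F u v) ` V"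
          using e1 e2 xU yS unfolding V_def pab
          by (intro image_eqI[of _ _ "(x, y)"]) (auto simp: F_def)
      qed
    qed
    have inj: "inj_on ?G (U \<times> U)"
    proof (rule inj_onI)
      fix p p' assume "p \<in> U \<times> U" "p' \<in> U \<times> U" and e0: "?G p = ?G p'"
      obtain a b where p: "p = (a, b)" by (cases p)
      obtain a' b' where p': "p' = (a', b')" by (cases p')
      from e0 have e: "?G (a, b) = ?G (a', b')" unfolding p p' .
      hence d: "a - a' = b - b'" and e2: "s * a - u * b = s * a' - u * b'" by (auto simp: algebra_simps)
      have "(s - u) * (a - a') = s * (a - a') - u * (b - b')" using d by (simp add: left_diff_distrib)
      also have "\<dots> = (s * a - u * b) - (s * a' - u * b')" by (simp add: algebra_simps)
      finally have "(s - u) * (a - a') = 0" using e2 by simp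
      hence "a = a'" using su(3) by simp
      thus "p = p'" using d unfolding p p' by simp
    qed
    have "card (?G ` (U \<times> U)) = card U * card U"
      by (subst card_image[OF inj]) (simp add: card_cartesian_product)
    thus ?thesis unfolding eq using cU by (simp add: power_add[symmetric] mult_2)
  qed
  show ?thesis
    apply (rule exI[of _ V], rule exI[of _ F], rule exI[of _ S])
    using subV finV cV cS linF FVV cF cD by blast
qed




lemma transport:
  fixes sc :: "'a::{finite,field} \<Rightarrow> 'b::ab_group_add \<Rightarrow> 'b" and V :: "'b set"
  assumes vs: "vector_space sc" and sub: "module.subspace sc V" and fin: "finite V"
    and cV: "card V = CARD('a)^CARD('n)"
  shows "\<exists>\<Phi> :: 'a^'n \<Rightarrow> 'b. Vector_Spaces.linear (*s) sc \<Phi> \<and> \<Phi> ` UNIV = V \<and> inj \<Phi>"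
proof -
  interpret W: vector_space sc by (rule vs)
  interpret VP: vector_space_pair "(*s) :: 'a \<Rightarrow> 'a^'n \<Rightarrow> _" sc by unfold_locales
  have q1: "CARD('a) > 1"
  proof -
    have "card {0::'a, 1} \<le> CARD('a)" by (rule card_mono) auto
    thus ?thesis by simp
  qed
  have dV: "W.dim V = CARD('n)"
  proof -
    have "CARD('a) ^ W.dim V = CARD('a) ^ CARD('n)" using vs_card_subspace[OF vs fin sub] cV by simp
    thus ?thesis using q1 by (simp add: power_inject_exp)
  qed
  obtain C where C: "C \<subseteq> V" "W.independent C" "V \<subseteq> W.span C" "card C = W.dim V"
    using W.basis_exists by blast
  have finC: "finite C" using C(1) fin finite_subset by blast
  have dU: "vec.dim (UNIV :: ('a^'n) set) = CARD('n)"
    by (simp add: vec.dim_UNIV card_cart_basis)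
  have "\<exists>f :: 'a^'n \<Rightarrow> 'b. Vector_Spaces.linear (*s) sc f \<and> f ` cart_basis = C \<and> f ` UNIV = V \<and> inj_on f UNIV"
    using VP.finite_basis_to_basis_subspace_isomorphism[OF vec.subspace_UNIV sub _ finite_cart_basis
       subset_UNIV independent_cart_basis _ _ finC C(1) C(2) C(3) C(4)]
      dU dV by (simp add: card_cart_basis)
  thus ?thesis by blast
qed

lemma rank_card:
  fixes sc :: "'a::{finite,field} \<Rightarrow> 'b::ab_group_add \<Rightarrow> 'b" and \<Phi> :: "'a^'n \<Rightarrow> 'b"
    and Mx :: "'a^'n^'n"
  assumes vs: "vector_space sc" and lin\<Phi>: "Vector_Spaces.linear (*s) sc \<Phi>"
    and \<Phi>V: "\<Phi> ` UNIV = V" and inj\<Phi>: "inj \<Phi>"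
    and linh: "Vector_Spaces.linear sc sc h"
    and rowX: "\<And>i. \<Phi> (row i Mx) = h (\<Phi> (axis i 1))"
  shows "CARD('a) ^ rank Mx = card (h ` V)"
proof -
  interpret W: vector_space sc by (rule vs)
  interpret VP: vector_space_pair "(*s) :: 'a \<Rightarrow> 'a^'n \<Rightarrow> _" sc by unfold_locales
  interpret WW: vector_space_pair sc sc by unfold_locales
  have r: "rank Mx = vec.dim (vec.span (rows Mx))"
    unfolding row_rank_def_gen by simp
  have c1: "card (vec.span (rows Mx)) = CARD('a) ^ vec.dim (vec.span (rows Mx))"
    by (rule vs_card_subspace[OF vec.vector_space_axioms]) auto
  have "\<Phi> ` vec.span (rows Mx) = W.span (\<Phi> ` rows Mx)"
    by (rule VP.linear_span_image[OF lin\<Phi>, symmetric])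
  also have "\<Phi> ` rows Mx = h ` \<Phi> ` cart_basis"
  proof -
    have L: "\<Phi> ` rows Mx = (\<lambda>i. \<Phi> (row i Mx)) ` UNIV" unfolding rows_def by auto
    have R: "h ` \<Phi> ` cart_basis = (\<lambda>i. h (\<Phi> (axis i 1))) ` UNIV" unfolding cart_basis_def by auto
    show ?thesis unfolding L R rowX ..
  qed
  also have "W.span (h ` \<Phi> ` cart_basis) = h ` W.span (\<Phi> ` cart_basis)"
    by (rule WW.linear_span_image[OF linh])
  also have "W.span (\<Phi> ` cart_basis) = \<Phi> ` vec.span cart_basis"
    by (rule VP.linear_span_image[OF lin\<Phi>])
  also have "\<dots> = V" using \<Phi>V by simp
  finally have "\<Phi> ` vec.span (rows Mx) = h ` V" .
  hence "card (vec.span (rows Mx)) = card (h ` V)"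
    using card_image[OF inj_on_subset[OF inj\<Phi> subset_UNIV]] by metis
  thus ?thesis using r c1 by simp
qed

lemma lin_vec_diff:
  fixes sc :: "'a::field \<Rightarrow> 'b::ab_group_add \<Rightarrow> 'b" and \<Phi> :: "'a^'n \<Rightarrow> 'b"
  assumes vs: "vector_space sc" and lin: "Vector_Spaces.linear (*s) sc \<Phi>"
  shows "\<Phi> (a - b) = \<Phi> a - \<Phi> b" and "\<Phi> 0 = 0"
proof -
  interpret W: vector_space sc by (rule vs)
  interpret VP: vector_space_pair "(*s) :: 'a \<Rightarrow> 'a^'n \<Rightarrow> _" sc by unfold_locales
  show "\<Phi> (a - b) = \<Phi> a - \<Phi> b" by (rule VP.linear_diff[OF lin])
  show "\<Phi> 0 = 0" by (rule VP.linear_0[OF lin])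
qed




theorem corollary3:
  fixes d :: nat
  assumes "even d" and "0 < d" and "d \<le> CARD('n)"
  shows "\<exists>(C :: ('a::{finite,field}^'n^'n) set) r.
           2 \<le> card C \<and> min_rank_distance C = d \<and>
           CARD('a) ^ (CARD('n) - d div 2) \<le> card (C \<inter> rank_ball (d div 2) r)"
proof -
  let ?q = "CARD('a)"
  define t where "t = d div 2"
  define k where "k = CARD('n) - t"
  have d2: "d = 2 * t" using assms(1) unfolding t_def by simp
  have t1: "1 \<le> t" using assms(2) d2 by simp
  have tk: "t \<le> k" using assms(3) d2 unfolding k_def by simp
  have tkn: "t + k = CARD('n)" using assms(3) d2 unfolding k_def by simp
  have q1: "?q > 1" using card_ge2[where 'a='a] by simp
  obtain V :: "('a alg_closure \<times> 'a alg_closure) set" and F and S :: "'a alg_closure set" where H: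
      "module.subspace scP V \<and> finite V \<and> card V = ?q^(t+k) \<and> card S = ?q^k \<and>
      (\<forall>s\<in>S. Vector_Spaces.linear scP scP (F s) \<and> F s ` V \<subseteq> V \<and> card (F s ` V) \<le> ?q^t) \<and>
      (\<forall>s\<in>S. \<forall>u\<in>S. s \<noteq> u \<longrightarrow> card ((\<lambda>v. F s v - F u v) ` V) = ?q^(2*t))"
    using core[OF t1 tk, where 'a='a] by (elim exE) (rule that)
  have subV: "module.subspace scP V" and finV: "finite V" and cV: "card V = ?q^(t+k)"
    and cS: "card S = ?q^k" using H by simp_all
  have FS: "Vector_Spaces.linear scP scP (F s) \<and> F s ` V \<subseteq> V \<and> card (F s ` V) \<le> ?q^t" if "s \<in> S" for s
    using H that by simp
  have FD: "card ((\<lambda>v. F s v - F u v) ` V) = ?q^(2*t)" if "s \<in> S" "u \<in> S" "s \<noteq> u" for s u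
    using H that by simp
  interpret P: vector_space "scP :: 'a \<Rightarrow> _" by (rule vsP)
  interpret PP: vector_space_pair "scP :: 'a \<Rightarrow> _" "scP :: 'a \<Rightarrow> _" by unfold_locales
  obtain \<Phi> :: "'a^'n \<Rightarrow> 'a alg_closure \<times> 'a alg_closure" where
    lin\<Phi>: "Vector_Spaces.linear (*s) scP \<Phi>" and \<Phi>V: "\<Phi> ` UNIV = V" and inj\<Phi>: "inj \<Phi>"
  proof -
    have cVn: "card V = ?q ^ CARD('n)" using cV tkn by simp
    from transport[OF vsP subV finV cVn] show ?thesis using that by blast
  qed
  define Mx where "Mx s = (\<chi> i. inv_into UNIV \<Phi> (F s (\<Phi> (axis i 1))))" for s
  have inV: "F s (\<Phi> x) \<in> V" if "s \<in> S" for s x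
  proof -
    have "\<Phi> x \<in> V" using \<Phi>V by (metis rangeI)
    thus ?thesis using FS[OF that] by (metis image_subset_iff)
  qed
  have rowX: "\<Phi> (row i (Mx s)) = F s (\<Phi> (axis i 1))" if "s \<in> S" for s i
  proof -
    have "row i (Mx s) = inv_into UNIV \<Phi> (F s (\<Phi> (axis i 1)))" by (simp add: Mx_def row_def)
    thus ?thesis using inV[OF that] \<Phi>V by (simp add: f_inv_into_f)
  qed
  have rk: "rank (Mx s) \<le> t" if "s \<in> S" for s
  proof -
    have "?q ^ rank (Mx s) = card (F s ` V)"
      by (rule rank_card[OF vsP lin\<Phi> \<Phi>V inj\<Phi>]) (use FS[OF that] rowX[OF that] in auto)
    also have "\<dots> \<le> ?q ^ t" using FS[OF that] by blast
    finally show ?thesis by (rule power_le_imp_le_exp[OF q1])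
  qed
  have rkd: "rank (Mx s - Mx u) = d" if su: "s \<in> S" "u \<in> S" "s \<noteq> u" for s u
  proof -
    have lin: "Vector_Spaces.linear scP scP (\<lambda>v. F s v - F u v)"
      using FS[OF su(1)] FS[OF su(2)] by (intro PP.linear_compose_sub) auto
    have "?q ^ rank (Mx s - Mx u) = card ((\<lambda>v. F s v - F u v) ` V)"
    proof (rule rank_card[OF vsP lin\<Phi> \<Phi>V inj\<Phi> lin])
      fix i
      have "row i (Mx s - Mx u) = row i (Mx s) - row i (Mx u)" by (simp add: row_def vec_eq_iff)
      hence "\<Phi> (row i (Mx s - Mx u)) = \<Phi> (row i (Mx s)) - \<Phi> (row i (Mx u))"
        by (simp add: lin_vec_diff(1)[OF vsP lin\<Phi>])
      thus "\<Phi> (row i (Mx s - Mx u)) = F s (\<Phi> (axis i 1)) - F u (\<Phi> (axis i 1))"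
        using rowX[OF su(1)] rowX[OF su(2)] by simp
    qed
    also have "\<dots> = ?q ^ (2*t)" using FD[OF su] .
    finally show ?thesis using q1 d2 by (simp add: power_inject_exp)
  qed
  have rk0: "rank (0 :: 'a^'n^'n) = 0"
  proof -
    have lin0: "Vector_Spaces.linear (scP :: 'a \<Rightarrow> _) scP (\<lambda>v. 0)"
      unfolding Vector_Spaces.linear_iff using vsP by (simp add: scP_def zero_prod_def)
    have "?q ^ rank (0 :: 'a^'n^'n) = card ((\<lambda>v. 0 :: 'a alg_closure \<times> 'a alg_closure) ` V)"
    proof (rule rank_card[OF vsP lin\<Phi> \<Phi>V inj\<Phi> lin0])
      fix i
      have "row i (0 :: 'a^'n^'n) = 0" by (simp add: row_def vec_eq_iff)
      thus "\<Phi> (row i (0 :: 'a^'n^'n)) = 0" by (simp add: lin_vec_diff(2)[OF vsP lin\<Phi>])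
    qed
    also have "V \<noteq> {}" using \<Phi>V by auto
    hence "card ((\<lambda>v. 0 :: 'a alg_closure \<times> 'a alg_closure) ` V) = 1" by (simp add: image_constant_conv)
    finally show ?thesis using q1 by simp
  qed
  have injX: "inj_on Mx S"
  proof (rule inj_onI, rule ccontr)
    fix s u assume su: "s \<in> S" "u \<in> S" "Mx s = Mx u" "s \<noteq> u"
    have "rank (Mx s - Mx u) = d" by (rule rkd[OF su(1) su(2) su(4)])
    hence "rank (0 :: 'a^'n^'n) = d" using \<open>Mx s = Mx u\<close> by simp
    thus False using rk0 assms(2) by simp
  qed
  define C where "C = Mx ` S"
  have cC: "card C = ?q ^ k" unfolding C_def using card_image[OF injX] cS by simp
  have qk2: "?q ^ k \<ge> 2"
  proof -
    have "?q ^ 1 \<le> ?q ^ k" using t1 tk q1 by (intro power_increasing) auto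
    thus ?thesis using card_ge2[where 'a='a] by simp
  qed
  have finS: "finite S" using cS qk2 by (intro card_ge_0_finite) simp
  have "S \<noteq> {}" using cS qk2 by auto
  then obtain s0 where s0: "s0 \<in> S" by blast
  have "card (S - {s0}) = card S - 1" using s0 finS by simp
  hence "card (S - {s0}) > 0" using cS qk2 by simp
  hence "S - {s0} \<noteq> {}" by (metis card.empty less_irrefl)
  then obtain u0 where u0: "u0 \<in> S - {s0}" by blast
  have s0u0: "s0 \<in> S" "u0 \<in> S" "s0 \<noteq> u0" using s0 u0 by auto
  have dist: "{rank_dist c1 c2 | c1 c2. c1 \<in> C \<and> c2 \<in> C \<and> c1 \<noteq> c2} = {d}"
  proof
    show "{rank_dist c1 c2 | c1 c2. c1 \<in> C \<and> c2 \<in> C \<and> c1 \<noteq> c2} \<subseteq> {d}"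
    proof
      fix x assume "x \<in> {rank_dist c1 c2 | c1 c2. c1 \<in> C \<and> c2 \<in> C \<and> c1 \<noteq> c2}"
      then obtain c1 c2 where x: "x = rank_dist c1 c2" "c1 \<in> C" "c2 \<in> C" "c1 \<noteq> c2" by blast
      then obtain s u where su: "s \<in> S" "u \<in> S" "c1 = Mx s" "c2 = Mx u" unfolding C_def by blast
      hence "s \<noteq> u" using x(4) by blast
      hence "x = d" using rkd[OF su(1) su(2)] x(1) su unfolding rank_dist_def by simp
      thus "x \<in> {d}" by simp
    qed
    have "Mx s0 \<noteq> Mx u0" using injX s0u0 by (auto dest: inj_onD)
    hence "rank_dist (Mx s0) (Mx u0) \<in> {rank_dist c1 c2 | c1 c2. c1 \<in> C \<and> c2 \<in> C \<and> c1 \<noteq> c2}"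
      unfolding C_def using s0u0 by blast
    thus "{d} \<subseteq> {rank_dist c1 c2 | c1 c2. c1 \<in> C \<and> c2 \<in> C \<and> c1 \<noteq> c2}"
      unfolding rank_dist_def using rkd[OF s0u0] by simp
  qed
  have mrd: "min_rank_distance C = d" unfolding min_rank_distance_def dist by simp
  have ball: "C \<inter> rank_ball t 0 = C"
  proof -
    have "C \<subseteq> rank_ball t 0"
    proof
      fix c assume "c \<in> C"
      then obtain s where "s \<in> S" "c = Mx s" unfolding C_def by blast
      thus "c \<in> rank_ball t 0" unfolding rank_ball_def using rk by simp
    qed
    thus ?thesis by blast
  qed
  show ?thesis
  proof (intro exI conjI)
    show "2 \<le> card C" using cC qk2 by simp
    show "min_rank_distance C = d" by (rule mrd)
    show "CARD('a) ^ (CARD('n) - d div 2) \<le> card (C \<inter> rank_ball (d div 2) 0)"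
      using ball cC unfolding k_def t_def by simp
  qed
qed


end
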